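(* Let $p,q>0$ and for $x,y\in\mathbb{R}$ and $f,g\in L^p(\mathbb{R}^d)$ set $h_p(x,y)=\sqrt{(|x|^p+|y|^p)|x-y|^p}$ and $H_p(f,g)=\sqrt{(\|f\|_p^p+\|g\|_p^p)\|f-g\|_p^p}$, where $\|f\|_p^p=\int_{\mathbb{R}^d}|f|^p$. Then: (i) for all $x,y\in\mathbb{R}$, $|x-y|^p\le\max(1,2^{\frac{p-1}{2}})h_p(x,y)$ and $|x^2-y^2|^{p/2}\le\max(1,2^{\frac{p-1}{2}})h_p(x,y)$; (ii) for all $f,g\in L^p(\mathbb{R}^d)$, $\int_{\mathbb{R}^d}h_p(f(\mathbf{r}),g(\mathbf{r}))\,\mathrm{d}\mathbf{r}\le H_p(f,g)$; (iii) for all $f,g\in L^p(\mathbb{R}^d)\cap L^q(\mathbb{R}^d)$ and $\lambda\in[0,1]$, $H_{\lambda p+(1-\lambda)q}(f,g)\le\sqrt{\lambda}\,H_p(f,g)+\sqrt{1-\lambda}\,H_q(f,g)$. *)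

theory Defs
  imports "HOL-Analysis.Analysis"
begin

definition hp :: "real \<Rightarrow> real \<Rightarrow> real \<Rightarrow> real" where
  "hp p x y = sqrt ((\<bar>x\<bar> powr p + \<bar>y\<bar> powr p) * \<bar>x - y\<bar> powr p)"

definition in_Lp :: "real \<Rightarrow> ('a::euclidean_space \<Rightarrow> real) \<Rightarrow> bool" where
  "in_Lp p f \<longleftrightarrow> f \<in> borel_measurable lebesgue \<and> integrable lebesgue (\<lambda>r. \<bar>f r\<bar> powr p)"

definition Lp_pow :: "real \<Rightarrow> ('a::euclidean_space \<Rightarrow> real) \<Rightarrow> real" where
  "Lp_pow p f = (\<integral>r. \<bar>f r\<bar> powr p \<partial>lebesgue)"

definition Hp :: "real \<Rightarrow> ('a::euclidean_space \<Rightarrow> real) \<Rightarrow> ('a \<Rightarrow> real) \<Rightarrow> real" where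
  "Hp p f g = sqrt ((Lp_pow p f + Lp_pow p g) * Lp_pow p (\<lambda>r. f r - g r))"

end

theory Submission imports Defs begin

lemma wamgm:
  fixes a b l :: real
  assumes "0 \<le> a" "0 \<le> b" "0 \<le> l" "l \<le> 1"
  shows "a powr l * b powr (1 - l) \<le> l * a + (1 - l) * b"
proof (cases "a = 0 \<or> b = 0")
  case True then show ?thesis using assms by auto
next
  case False then show ?thesis using Youngs_inequality_0[of l "1-l" a b] assms by auto
qed

lemma fin_holder:
  fixes a b c d l :: real
  assumes "0 \<le> a" "0 \<le> b" "0 \<le> c" "0 \<le> d" "0 \<le> l" "l \<le> 1"
  shows "a powr l * b powr (1 - l) + c powr l * d powr (1 - l) \<le> (a + c) powr l * (b + d) powr (1 - l)"
proof (cases "a + c = 0 \<or> b + d = 0")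
  case True
  then have "(a = 0 \<and> c = 0) \<or> (b = 0 \<and> d = 0)" using assms by linarith
  then show ?thesis using assms by auto
next
  case False
  define S where "S = a + c"
  define T where "T = b + d"
  have S: "S > 0" and T: "T > 0" using False assms unfolding S_def T_def by auto
  define K where "K = S powr l * T powr (1 - l)"
  have K: "K \<ge> 0" unfolding K_def by simp
  have e1: "a powr l * b powr (1 - l) = K * ((a/S) powr l * (b/T) powr (1 - l))"
    using S T assms unfolding K_def by (simp add: powr_divide field_simps)
  have e2: "c powr l * d powr (1 - l) = K * ((c/S) powr l * (d/T) powr (1 - l))"
    using S T assms unfolding K_def by (simp add: powr_divide field_simps)
  have "a powr l * b powr (1 - l) + c powr l * d powr (1 - l)
     \<le> K * (l * (a/S) + (1-l) * (b/T)) + K * (l * (c/S) + (1-l) * (d/T))"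
    unfolding e1 e2
    by (intro add_mono mult_left_mono wamgm K) (use assms S T in auto)
  also have "\<dots> = K * (l * ((a + c)/S) + (1-l) * ((b+d)/T))"
    by (simp add: algebra_simps add_divide_distrib)
  also have "\<dots> = K" using S T by (simp add: S_def T_def)
  finally show ?thesis unfolding K_def S_def T_def .
qed

lemma int_holder:
  fixes u v :: "'b \<Rightarrow> real" and l :: real
  assumes iu: "integrable M u" and iv: "integrable M v"
    and u0: "\<And>x. 0 \<le> u x" and v0: "\<And>x. 0 \<le> v x" and l: "0 \<le> l" "l \<le> 1"
  shows "integrable M (\<lambda>x. u x powr l * v x powr (1 - l))"
    and "(\<integral>x. u x powr l * v x powr (1 - l) \<partial>M) \<le> (\<integral>x. u x \<partial>M) powr l * (\<integral>x. v x \<partial>M) powr (1 - l)"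
proof -
  have mu[measurable]: "u \<in> borel_measurable M" using iu by auto
  have mv[measurable]: "v \<in> borel_measurable M" using iv by auto
  show int: "integrable M (\<lambda>x. u x powr l * v x powr (1 - l))"
  proof (rule Bochner_Integration.integrable_bound[where f="\<lambda>x. l * u x + (1 - l) * v x"])
    show "integrable M (\<lambda>x. l * u x + (1 - l) * v x)" using iu iv by auto
    show "(\<lambda>x. u x powr l * v x powr (1 - l)) \<in> borel_measurable M" by measurable
    show "AE x in M. norm (u x powr l * v x powr (1 - l)) \<le> norm (l * u x + (1 - l) * v x)"
      using wamgm[OF u0 v0 l] u0 v0 l by (auto intro!: AE_I2 simp: abs_of_nonneg)
  qed
  define U where "U = (\<integral>x. u x \<partial>M)"
  define V where "V = (\<integral>x. v x \<partial>M)"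
  have U0: "U \<ge> 0" unfolding U_def using u0 by simp
  have V0: "V \<ge> 0" unfolding V_def using v0 by simp
  show "(\<integral>x. u x powr l * v x powr (1 - l) \<partial>M) \<le> (\<integral>x. u x \<partial>M) powr l * (\<integral>x. v x \<partial>M) powr (1 - l)"
  proof (cases "U = 0 \<or> V = 0")
    case True
    then have "AE x in M. u x = 0 \<or> v x = 0"
    proof
      assume "U = 0"
      then have "AE x in M. u x = 0" using integral_nonneg_eq_0_iff_AE[OF iu] u0 unfolding U_def by auto
      then show ?thesis by auto
    next
      assume "V = 0"
      then have "AE x in M. v x = 0" using integral_nonneg_eq_0_iff_AE[OF iv] v0 unfolding V_def by auto
      then show ?thesis by auto
    qed
    then have "AE x in M. u x powr l * v x powr (1 - l) = 0" by auto
    then have "(\<integral>x. u x powr l * v x powr (1 - l) \<partial>M) = 0"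
      using integral_cong_AE[of "\<lambda>x. u x powr l * v x powr (1 - l)" M "\<lambda>x. 0"] by auto
    then show ?thesis by (simp flip: U_def V_def)
  next
    case False
    then have U: "U > 0" and V: "V > 0" using U0 V0 by auto
    define K where "K = U powr l * V powr (1 - l)"
    have "(\<integral>x. u x powr l * v x powr (1 - l) \<partial>M) \<le> (\<integral>x. K * (l * (u x / U) + (1 - l) * (v x / V)) \<partial>M)"
    proof (rule integral_mono[OF int])
      show "integrable M (\<lambda>x. K * (l * (u x / U) + (1 - l) * (v x / V)))" using iu iv by auto
      fix x
      have "u x powr l * v x powr (1 - l) = K * ((u x/U) powr l * (v x/V) powr (1 - l))"
        using U V u0[of x] v0[of x] unfolding K_def by (simp add: powr_divide field_simps)
      also have "\<dots> \<le> K * (l * (u x / U) + (1 - l) * (v x / V))"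
        by (intro mult_left_mono wamgm) (use U V u0 v0 l in \<open>auto simp: K_def\<close>)
      finally show "u x powr l * v x powr (1 - l) \<le> K * (l * (u x / U) + (1 - l) * (v x / V))" .
    qed
    also have "\<dots> = K * (l * (U / U) + (1 - l) * (V / V))"
      using iu iv by (simp add: U_def V_def)
    also have "\<dots> = K" using U V by simp
    finally show ?thesis unfolding K_def U_def V_def .
  qed
qed

lemma sum_powr_le:
  fixes a b p :: real
  assumes a: "0 \<le> a" and b: "0 \<le> b" and p: "0 < p"
  shows "(a + b) powr p \<le> max 1 (2 powr (p - 1)) * (a powr p + b powr p)"
proof (cases "p \<ge> 1")
  case True
  have "(a powr p) powr (1/p) * 1 powr (1 - 1/p) + (b powr p) powr (1/p) * 1 powr (1 - 1/p)
        \<le> (a powr p + b powr p) powr (1/p) * (1 + 1) powr (1 - 1/p)"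
    using fin_holder[of "a powr p" 1 "b powr p" 1 "1/p"] p True by auto
  then have "a + b \<le> (a powr p + b powr p) powr (1/p) * 2 powr (1 - 1/p)"
    using a b p by (simp add: powr_powr)
  then have "(a + b) powr p \<le> ((a powr p + b powr p) powr (1/p) * 2 powr (1 - 1/p)) powr p"
    by (intro powr_mono2) (use a b p in auto)
  also have "\<dots> = (a powr p + b powr p) * 2 powr (p - 1)"
  proof -
    have "(1 - 1/p) * p = p - 1" using p by (simp add: field_simps)
    then show ?thesis using p a b by (simp add: powr_mult powr_powr)
  qed
  also have "\<dots> \<le> max 1 (2 powr (p - 1)) * (a powr p + b powr p)"
    by (subst mult.commute, intro mult_right_mono) auto
  finally show ?thesis .
next
  case False
  show ?thesis
  proof (cases "a + b = 0")
    case True then show ?thesis using a b by simp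
  next
    case nz: False
    define s where "s = a + b"
    have s: "s > 0" using a b nz unfolding s_def by auto
    have "a / s \<le> (a / s) powr p"
      using powr_mono'[of p 1 "a/s"] False a b s by (simp add: s_def)
    moreover have "b / s \<le> (b / s) powr p"
      using powr_mono'[of p 1 "b/s"] False a b s by (simp add: s_def)
    ultimately have "a / s + b / s \<le> a powr p / s powr p + b powr p / s powr p"
      using s a b by (simp add: powr_divide)
    moreover have "a / s + b / s = 1" using s unfolding s_def by (simp add: add_divide_distrib[symmetric])
    moreover have "(a powr p + b powr p) / s powr p = a powr p / s powr p + b powr p / s powr p"
      by (rule add_divide_distrib)
    ultimately have "1 \<le> (a powr p + b powr p) / s powr p"
      by linarith
    then have "s powr p \<le> a powr p + b powr p" using s by (simp add: le_divide_eq_1_pos)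
    also have "\<dots> \<le> max 1 (2 powr (p - 1)) * (a powr p + b powr p)"
      using mult_right_mono[of 1 "max 1 (2 powr (p - 1))" "a powr p + b powr p"] by simp
    finally show ?thesis unfolding s_def .
  qed
qed

lemma pw_bounds:
  fixes x y p :: real
  assumes p: "0 < p"
  shows "\<bar>x - y\<bar> powr p \<le> max 1 (2 powr (p - 1)) * (\<bar>x\<bar> powr p + \<bar>y\<bar> powr p)"
    and "\<bar>x + y\<bar> powr p \<le> max 1 (2 powr (p - 1)) * (\<bar>x\<bar> powr p + \<bar>y\<bar> powr p)"
proof -
  have "\<bar>x - y\<bar> powr p \<le> (\<bar>x\<bar> + \<bar>y\<bar>) powr p" by (intro powr_mono2) (use p in auto)
  then show "\<bar>x - y\<bar> powr p \<le> max 1 (2 powr (p - 1)) * (\<bar>x\<bar> powr p + \<bar>y\<bar> powr p)"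
    using sum_powr_le[OF abs_ge_zero abs_ge_zero p, of x y] by linarith
  have "\<bar>x + y\<bar> powr p \<le> (\<bar>x\<bar> + \<bar>y\<bar>) powr p" by (intro powr_mono2) (use p in auto)
  then show "\<bar>x + y\<bar> powr p \<le> max 1 (2 powr (p - 1)) * (\<bar>x\<bar> powr p + \<bar>y\<bar> powr p)"
    using sum_powr_le[OF abs_ge_zero abs_ge_zero p, of x y] by linarith
qed

lemma part1:
  fixes x y p :: real
  assumes p: "0 < p"
  shows "\<bar>x - y\<bar> powr p \<le> max 1 (2 powr ((p - 1) / 2)) * sqrt ((\<bar>x\<bar> powr p + \<bar>y\<bar> powr p) * \<bar>x - y\<bar> powr p)"
    and "\<bar>x\<^sup>2 - y\<^sup>2\<bar> powr (p / 2) \<le> max 1 (2 powr ((p - 1) / 2)) * sqrt ((\<bar>x\<bar> powr p + \<bar>y\<bar> powr p) * \<bar>x - y\<bar> powr p)"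
proof -
  define C where "C = max 1 (2 powr ((p - 1) / 2))"
  define A where "A = \<bar>x\<bar> powr p + \<bar>y\<bar> powr p"
  define D where "D = \<bar>x - y\<bar> powr p"
  define E where "E = \<bar>x + y\<bar> powr p"
  have C0: "C \<ge> 1" unfolding C_def by simp
  have CC: "C^2 = max 1 (2 powr (p - 1))"
  proof -
    have "(2 powr ((p - 1) / 2))^2 = 2 powr (p - 1)"
      by (simp add: power2_eq_square flip: powr_add)
    moreover have "C^2 = max 1 ((2 powr ((p - 1) / 2))^2)"
    proof (cases "1 \<le> 2 powr ((p - 1) / 2)")
      case True
      then have "1 \<le> (2 powr ((p - 1) / 2))^2" using one_le_power by blast
      then show ?thesis using True unfolding C_def by (simp add: max_def)
    next
      case False
      then have "(2 powr ((p - 1) / 2))^2 \<le> 1" by (intro power_le_one) auto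
      then show ?thesis using False unfolding C_def by (simp add: max_def)
    qed
    ultimately show ?thesis by simp
  qed
  have A0: "A \<ge> 0" and D0: "D \<ge> 0" and E0: "E \<ge> 0" unfolding A_def D_def E_def by auto
  have DA: "D \<le> C^2 * A" using pw_bounds(1)[OF p, of x y] unfolding CC A_def D_def .
  have EA: "E \<le> C^2 * A" using pw_bounds(2)[OF p, of x y] unfolding CC A_def E_def .
  have sD: "sqrt D \<le> C * sqrt A"
    using real_sqrt_le_mono[OF DA] C0 A0 by (simp add: real_sqrt_mult)
  have sE: "sqrt E \<le> C * sqrt A"
    using real_sqrt_le_mono[OF EA] C0 A0 by (simp add: real_sqrt_mult)
  have "D = sqrt D * sqrt D" using D0 by simp
  also have "\<dots> \<le> sqrt D * (C * sqrt A)" by (intro mult_left_mono sD) (use D0 in auto)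
  also have "\<dots> = C * sqrt (A * D)" by (simp add: real_sqrt_mult)
  finally show "\<bar>x - y\<bar> powr p \<le> max 1 (2 powr ((p - 1) / 2)) * sqrt ((\<bar>x\<bar> powr p + \<bar>y\<bar> powr p) * \<bar>x - y\<bar> powr p)"
    unfolding C_def A_def D_def .
  have "\<bar>x\<^sup>2 - y\<^sup>2\<bar> powr (p / 2) = (\<bar>x - y\<bar> * \<bar>x + y\<bar>) powr (p / 2)"
    by (simp add: power2_eq_square algebra_simps abs_mult[symmetric])
  also have "\<dots> = sqrt D * sqrt E"
    unfolding D_def E_def by (simp add: powr_mult powr_half_sqrt[symmetric] powr_powr)
  also have "\<dots> \<le> sqrt D * (C * sqrt A)" by (intro mult_left_mono sE) (use D0 in auto)
  also have "\<dots> = C * sqrt (A * D)" by (simp add: real_sqrt_mult)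
  finally show "\<bar>x\<^sup>2 - y\<^sup>2\<bar> powr (p / 2) \<le> max 1 (2 powr ((p - 1) / 2)) * sqrt ((\<bar>x\<bar> powr p + \<bar>y\<bar> powr p) * \<bar>x - y\<bar> powr p)"
    unfolding C_def A_def D_def .
qed

lemma Lp_pow_nonneg: "Lp_pow p f \<ge> 0"
  unfolding Lp_pow_def by simp

lemma diff_int:
  fixes f g :: "'a::euclidean_space \<Rightarrow> real"
  assumes p: "p > 0" and f: "in_Lp p f" and g: "in_Lp p g"
  shows "integrable lebesgue (\<lambda>r. \<bar>f r - g r\<bar> powr p)"
proof -
  have [measurable]: "f \<in> borel_measurable lebesgue" "g \<in> borel_measurable lebesgue"
    using f g unfolding in_Lp_def by auto
  have if_: "integrable lebesgue (\<lambda>r. \<bar>f r\<bar> powr p)" "integrable lebesgue (\<lambda>r. \<bar>g r\<bar> powr p)"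
    using f g unfolding in_Lp_def by auto
  show ?thesis
  proof (rule Bochner_Integration.integrable_bound[where f="\<lambda>r. max 1 (2 powr (p - 1)) * (\<bar>f r\<bar> powr p + \<bar>g r\<bar> powr p)"])
    show "integrable lebesgue (\<lambda>r. max 1 (2 powr (p - 1)) * (\<bar>f r\<bar> powr p + \<bar>g r\<bar> powr p))"
      using if_ by auto
    show "(\<lambda>r. \<bar>f r - g r\<bar> powr p) \<in> borel_measurable lebesgue" by measurable
    show "AE r in lebesgue. norm (\<bar>f r - g r\<bar> powr p) \<le> norm (max 1 (2 powr (p - 1)) * (\<bar>f r\<bar> powr p + \<bar>g r\<bar> powr p))"
    proof (rule AE_I2)
      fix r
      have "0 \<le> max 1 (2 powr (p - 1)) * (\<bar>f r\<bar> powr p + \<bar>g r\<bar> powr p)" by simp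
      then show "norm (\<bar>f r - g r\<bar> powr p) \<le> norm (max 1 (2 powr (p - 1)) * (\<bar>f r\<bar> powr p + \<bar>g r\<bar> powr p))"
        using pw_bounds(1)[OF p, of "f r" "g r"] by simp
    qed
  qed
qed

lemma part2:
  fixes f g :: "'a::euclidean_space \<Rightarrow> real"
  assumes p: "p > 0" and f: "in_Lp p f" and g: "in_Lp p g"
  shows "(\<integral>\<^sup>+ r. ennreal (hp p (f r) (g r)) \<partial>lebesgue) \<le> ennreal (Hp p f g)"
proof -
  have [measurable]: "f \<in> borel_measurable lebesgue" "g \<in> borel_measurable lebesgue"
    using f g unfolding in_Lp_def by auto
  have if_: "integrable lebesgue (\<lambda>r. \<bar>f r\<bar> powr p)" "integrable lebesgue (\<lambda>r. \<bar>g r\<bar> powr p)"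
    using f g unfolding in_Lp_def by auto
  define a where "a = (\<lambda>r. \<bar>f r\<bar> powr p + \<bar>g r\<bar> powr p)"
  define b where "b = (\<lambda>r. \<bar>f r - g r\<bar> powr p)"
  have ia: "integrable lebesgue a" unfolding a_def using if_ by auto
  have ib: "integrable lebesgue b" unfolding b_def using diff_int[OF p f g] .
  have hpe: "hp p (f r) (g r) = a r powr (1/2) * b r powr (1 - 1/2)" for r
    unfolding hp_def a_def b_def by (simp add: real_sqrt_mult powr_half_sqrt)
  have H1: "integrable lebesgue (\<lambda>r. a r powr (1/2) * b r powr (1 - 1/2))"
    and H2: "(\<integral>r. a r powr (1/2) * b r powr (1 - 1/2) \<partial>lebesgue) \<le> (\<integral>r. a r \<partial>lebesgue) powr (1/2) * (\<integral>r. b r \<partial>lebesgue) powr (1 - 1/2)"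
    using int_holder[OF ia ib, of "1/2"] by (auto simp: a_def b_def)
  have eqA: "(\<integral>r. a r \<partial>lebesgue) = Lp_pow p f + Lp_pow p g"
    unfolding a_def Lp_pow_def using if_ by simp
  have eqB: "(\<integral>r. b r \<partial>lebesgue) = Lp_pow p (\<lambda>r. f r - g r)"
    unfolding b_def Lp_pow_def by simp
  have "(\<integral>\<^sup>+ r. ennreal (hp p (f r) (g r)) \<partial>lebesgue) = ennreal (\<integral>r. a r powr (1/2) * b r powr (1 - 1/2) \<partial>lebesgue)"
    unfolding hpe by (rule nn_integral_eq_integral[OF H1]) auto
  also have "\<dots> \<le> ennreal (Hp p f g)"
  proof (rule ennreal_leI)
    have "(\<integral>r. a r \<partial>lebesgue) powr (1/2) * (\<integral>r. b r \<partial>lebesgue) powr (1 - 1/2) = Hp p f g"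
      unfolding eqA eqB Hp_def using Lp_pow_nonneg[of p f] Lp_pow_nonneg[of p g] Lp_pow_nonneg[of p "\<lambda>r. f r - g r"]
      by (simp add: powr_half_sqrt real_sqrt_mult)
    then show "(\<integral>r. a r powr (1/2) * b r powr (1 - 1/2) \<partial>lebesgue) \<le> Hp p f g" using H2 by simp
  qed
  finally show ?thesis .
qed

lemma powr_split:
  fixes x p q l :: real
  shows "\<bar>x\<bar> powr (l * p + (1 - l) * q) = (\<bar>x\<bar> powr p) powr l * (\<bar>x\<bar> powr q) powr (1 - l)"
proof (cases "x = 0")
  case True then show ?thesis by simp
next
  case False then show ?thesis by (simp add: powr_powr powr_add mult.commute)
qed

lemma sqrt_powr_alg:
  fixes X Y Z W l :: real
  assumes "0 \<le> X" "0 \<le> Y" "0 \<le> Z" "0 \<le> W"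
  shows "sqrt (X powr l * Y powr (1 - l) * (Z powr l * W powr (1 - l))) = sqrt (X * Z) powr l * sqrt (Y * W) powr (1 - l)"
proof -
  have "X powr l * Y powr (1 - l) * (Z powr l * W powr (1 - l)) = (X * Z) powr l * (Y * W) powr (1 - l)"
    using assms by (simp add: powr_mult)
  then show ?thesis using assms
    by (simp add: powr_half_sqrt[symmetric] powr_mult powr_powr mult.commute)
qed

lemma part3:
  fixes f g :: "'a::euclidean_space \<Rightarrow> real"
  assumes p: "p > 0" and q: "q > 0" and fp: "in_Lp p f" and gp: "in_Lp p g"
    and fq: "in_Lp q f" and gq: "in_Lp q g" and l0: "0 \<le> l" and l1: "l \<le> 1"
  shows "Hp (l * p + (1 - l) * q) f g \<le> sqrt l * Hp p f g + sqrt (1 - l) * Hp q f g"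
proof -
  define r where "r = l * p + (1 - l) * q"
  have [measurable]: "f \<in> borel_measurable lebesgue" "g \<in> borel_measurable lebesgue"
    using fp gp unfolding in_Lp_def by auto
  have ifp: "integrable lebesgue (\<lambda>x. \<bar>f x\<bar> powr p)" "integrable lebesgue (\<lambda>x. \<bar>g x\<bar> powr p)"
    using fp gp unfolding in_Lp_def by auto
  have ifq: "integrable lebesgue (\<lambda>x. \<bar>f x\<bar> powr q)" "integrable lebesgue (\<lambda>x. \<bar>g x\<bar> powr q)"
    using fq gq unfolding in_Lp_def by auto
  have idp: "integrable lebesgue (\<lambda>x. \<bar>f x - g x\<bar> powr p)" using diff_int[OF p fp gp] .
  have idq: "integrable lebesgue (\<lambda>x. \<bar>f x - g x\<bar> powr q)" using diff_int[OF q fq gq] .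
  have ifr: "integrable lebesgue (\<lambda>x. \<bar>f x\<bar> powr r)"
    using int_holder(1)[OF ifp(1) ifq(1) _ _ l0 l1] unfolding r_def powr_split by simp
  have igr: "integrable lebesgue (\<lambda>x. \<bar>g x\<bar> powr r)"
    using int_holder(1)[OF ifp(2) ifq(2) _ _ l0 l1] unfolding r_def powr_split by simp
  define ap where "ap = (\<lambda>x. \<bar>f x\<bar> powr p + \<bar>g x\<bar> powr p)"
  define aq where "aq = (\<lambda>x. \<bar>f x\<bar> powr q + \<bar>g x\<bar> powr q)"
  have iap: "integrable lebesgue ap" unfolding ap_def using ifp by auto
  have iaq: "integrable lebesgue aq" unfolding aq_def using ifq by auto
  define Ap where "Ap = Lp_pow p f + Lp_pow p g"
  define Aq where "Aq = Lp_pow q f + Lp_pow q g"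
  define Bp where "Bp = Lp_pow p (\<lambda>x. f x - g x)"
  define Bq where "Bq = Lp_pow q (\<lambda>x. f x - g x)"
  define Ar where "Ar = Lp_pow r f + Lp_pow r g"
  define Br where "Br = Lp_pow r (\<lambda>x. f x - g x)"
  have eAp: "(\<integral>x. ap x \<partial>lebesgue) = Ap" unfolding ap_def Ap_def Lp_pow_def using ifp by simp
  have eAq: "(\<integral>x. aq x \<partial>lebesgue) = Aq" unfolding aq_def Aq_def Lp_pow_def using ifq by simp
  have "Ar = (\<integral>x. \<bar>f x\<bar> powr r + \<bar>g x\<bar> powr r \<partial>lebesgue)"
    unfolding Ar_def Lp_pow_def using ifr igr by simp
  also have "\<dots> \<le> (\<integral>x. ap x powr l * aq x powr (1 - l) \<partial>lebesgue)"
  proof (rule integral_mono)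
    show "integrable lebesgue (\<lambda>x. \<bar>f x\<bar> powr r + \<bar>g x\<bar> powr r)" using ifr igr by auto
    show "integrable lebesgue (\<lambda>x. ap x powr l * aq x powr (1 - l))"
      by (rule int_holder(1)[OF iap iaq _ _ l0 l1]) (auto simp: ap_def aq_def)
    fix x
    show "\<bar>f x\<bar> powr r + \<bar>g x\<bar> powr r \<le> ap x powr l * aq x powr (1 - l)"
      unfolding r_def powr_split ap_def aq_def by (rule fin_holder) (use l0 l1 in auto)
  qed
  also have "\<dots> \<le> Ap powr l * Aq powr (1 - l)"
    using int_holder(2)[OF iap iaq _ _ l0 l1] eAp eAq by (auto simp: ap_def aq_def)
  finally have Ar_le: "Ar \<le> Ap powr l * Aq powr (1 - l)" .
  have "Br = (\<integral>x. (\<bar>f x - g x\<bar> powr p) powr l * (\<bar>f x - g x\<bar> powr q) powr (1 - l) \<partial>lebesgue)"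
    unfolding Br_def Lp_pow_def r_def powr_split ..
  also have "\<dots> \<le> Bp powr l * Bq powr (1 - l)"
    using int_holder(2)[OF idp idq _ _ l0 l1] unfolding Bp_def Bq_def Lp_pow_def by simp
  finally have Br_le: "Br \<le> Bp powr l * Bq powr (1 - l)" .
  have nn: "0 \<le> Ap" "0 \<le> Aq" "0 \<le> Bp" "0 \<le> Bq" "0 \<le> Ar" "0 \<le> Br"
    unfolding Ap_def Aq_def Bp_def Bq_def Ar_def Br_def by (simp_all add: Lp_pow_nonneg add_nonneg_nonneg)
  have "Hp r f g = sqrt (Ar * Br)" unfolding Hp_def Ar_def Br_def ..
  also have "\<dots> \<le> sqrt (Ap powr l * Aq powr (1 - l) * (Bp powr l * Bq powr (1 - l)))"
    by (intro real_sqrt_le_mono mult_mono Ar_le Br_le) (use nn in auto)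
  also have "\<dots> = sqrt (Ap * Bp) powr l * sqrt (Aq * Bq) powr (1 - l)"
    by (rule sqrt_powr_alg) (use nn in auto)
  also have "\<dots> \<le> l * sqrt (Ap * Bp) + (1 - l) * sqrt (Aq * Bq)"
    by (rule wamgm) (use nn l0 l1 in auto)
  also have "\<dots> \<le> sqrt l * sqrt (Ap * Bp) + sqrt (1 - l) * sqrt (Aq * Bq)"
  proof -
    have le: "t \<le> sqrt t" if "0 \<le> t" "t \<le> 1" for t :: real
    proof -
      have "sqrt t \<le> 1" using that by simp
      then have "sqrt t * sqrt t \<le> sqrt t * 1" by (intro mult_left_mono) (use that in auto)
      then show ?thesis using that by simp
    qed
    show ?thesis
      by (intro add_mono mult_right_mono le) (use nn l0 l1 in auto)
  qed
  also have "\<dots> = sqrt l * Hp p f g + sqrt (1 - l) * Hp q f g"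
    unfolding Hp_def Ap_def Aq_def Bp_def Bq_def ..
  finally show ?thesis unfolding r_def .
qed

theorem lemma3p11:
  fixes p q :: real
  assumes "p > 0" and "q > 0"
  shows "(\<forall>x y::real.
            \<bar>x - y\<bar> powr p \<le> max 1 (2 powr ((p - 1) / 2)) * hp p x y \<and>
            \<bar>x\<^sup>2 - y\<^sup>2\<bar> powr (p / 2) \<le> max 1 (2 powr ((p - 1) / 2)) * hp p x y)
       \<and> (\<forall>f g :: 'a::euclidean_space \<Rightarrow> real. in_Lp p f \<longrightarrow> in_Lp p g \<longrightarrow>
            (\<integral>\<^sup>+ r. ennreal (hp p (f r) (g r)) \<partial>lebesgue) \<le> ennreal (Hp p f g))
       \<and> (\<forall>(f :: 'a \<Rightarrow> real) g (l::real). in_Lp p f \<longrightarrow> in_Lp p g \<longrightarrow> in_Lp q f \<longrightarrow> in_Lp q g \<longrightarrow>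
            0 \<le> l \<longrightarrow> l \<le> 1 \<longrightarrow>
            Hp (l * p + (1 - l) * q) f g \<le> sqrt l * Hp p f g + sqrt (1 - l) * Hp q f g)"
  using part1[OF assms(1)] part2[OF assms(1)] part3[OF assms] unfolding hp_def by blast

end
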